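(* Let $J:=\operatorname{conv}\{\mathbf{v}_0,\mathbf{v}_1,\dots,\mathbf{v}_d\}\subset\mathbb{R}^d$ be a $d$-simplex, $\mathbf{c}\in\mathbb{R}^d\setminus\{\mathbf{0}\}$, $q\ge1$ real, and suppose $\mathbf{c}^\top\mathbf{v}_j\ge0$ for $j=0,\dots,d$. Then $$\int_J(\mathbf{c}^\top\mathbf{x})^q\,d\mathbf{x}\ge d!\operatorname{vol}(J)\frac{\Gamma(q+1)}{\Gamma(q+d+1)}\sum_{j=0}^d(\mathbf{c}^\top\mathbf{v}_j)^q.$$ The inequality becomes (asymptotically) tight when $\frac{\mathbf{c}^\top\mathbf{v}_j}{\mathbf{c}^\top\mathbf{v}_k}\to0$ for all $j\neq k$, where $k$ is an index with $\mathbf{c}^\top\mathbf{v}_k=\max_j\mathbf{c}^\top\mathbf{v}_j$.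
   Context: $\operatorname{vol}(J)$ is the $d$-dimensional Lebesgue measure of $J$; $\Gamma$ is the gamma function. *)

theory Defs
  imports "HOL-Analysis.Analysis"
begin

end

theory Submission
  imports Defs
begin


lemma powr_has_integral:
  fixes a q :: real
  assumes a: "0 \<le> a" and q: "q > 0"
  shows "((\<lambda>t. q * t powr (q - 1)) has_integral a powr q) {0..a}"
proof -
  have "((\<lambda>t. q * t powr (q - 1)) has_integral (a powr q - 0 powr q)) {0..a}"
  proof (rule fundamental_theorem_of_calculus_interior)
    show "continuous_on {0..a} (\<lambda>t. t powr q)"
      using q by (intro continuous_on_powr') (auto intro: continuous_intros)
    fix x assume "x \<in> {0<..<a}"
    then have "x > 0" by auto
    then show "((\<lambda>t. t powr q) has_vector_derivative q * x powr (q - 1)) (at x)"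
      using has_real_derivative_powr[of x q]
      by (simp add: has_real_derivative_iff_has_vector_derivative)
  qed (use a in auto)
  then show ?thesis by simp
qed

lemma powr_nn_integral:
  fixes a q :: real
  assumes a: "0 \<le> a" and q: "q > 0"
  shows "(\<integral>\<^sup>+t. ennreal (indicator {0..a} t * (q * t powr (q - 1))) \<partial>lborel) = ennreal (a powr q)"
  using nn_integral_has_integral_lebesgue[OF _ powr_has_integral[OF a q]] q by simp

lemma layer_cake_simplex:
  fixes l :: "'a::euclidean_space \<Rightarrow> real" and J :: "'a set" and p :: 'a and q :: real
  assumes J: "compact J" and l: "l \<in> borel_measurable borel" and q: "q > 0"
    and lJ: "\<And>x. x \<in> J \<Longrightarrow> 0 \<le> l x \<and> l x \<le> 1"
    and sl: "\<And>t. 0 < t \<Longrightarrow> t < 1 \<Longrightarrow> {x\<in>J. t \<le> l x} = (\<lambda>y. (1-t) *\<^sub>R y + t *\<^sub>R p) ` J"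
  shows "((\<lambda>x. l x powr q) has_integral (measure lebesgue J * (q * Beta q (real DIM('a) + 1)))) J"
proof -
  define n where "n = DIM('a)"
  define M where "M = measure lebesgue J"
  have Jb: "J \<in> sets borel" using J by (simp add: compact_imp_closed borel_closed)
  have M0: "M \<ge> 0" by (simp add: M_def)
  have Jfin: "emeasure lborel J = ennreal M"
  proof -
    have "emeasure lborel J < \<infinity>" using J by (intro emeasure_bounded_finite compact_imp_bounded)
    then show ?thesis unfolding M_def using Jb
      by (simp add: emeasure_eq_ennreal_measure)
  qed
  have S_meas: "{x\<in>J. t \<le> l x} \<in> sets lborel" for t
    using Jb l by measurable
  have "(\<integral>\<^sup>+x. ennreal (indicator J x * l x powr q) \<partial>lborel)
      = (\<integral>\<^sup>+x. \<integral>\<^sup>+t. ennreal (indicator J x * indicator {0..l x} t * (q * t powr (q - 1))) \<partial>lborel \<partial>lborel)"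
  proof (rule nn_integral_cong)
    fix x :: 'a
    show "ennreal (indicator J x * l x powr q) =
      (\<integral>\<^sup>+t. ennreal (indicator J x * indicator {0..l x} t * (q * t powr (q - 1))) \<partial>lborel)"
    proof (cases "x \<in> J")
      case True
      then show ?thesis using powr_nn_integral[of "l x" q] lJ[OF True] q
        by (simp add: mult.assoc)
    qed simp
  qed
  also have "\<dots> = (\<integral>\<^sup>+t. \<integral>\<^sup>+x. ennreal (indicator J x * indicator {0..l x} t * (q * t powr (q - 1))) \<partial>lborel \<partial>lborel)"
  proof (rule lborel_pair.Fubini'[symmetric])
    have ind: "indicator {0..l x} t = (if 0 \<le> t \<and> t \<le> l x then 1 else (0::real))" for x t
      by (simp add: indicator_def)
    show "(\<lambda>(x, t). ennreal (indicator J x * indicator {0..l x} t * (q * t powr (q - 1)))) \<in> borel_measurable (lborel \<Otimes>\<^sub>M lborel)"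
      unfolding ind using Jb l by measurable
  qed
  also have "\<dots> = (\<integral>\<^sup>+t. ennreal (indicator {0..} t * (q * t powr (q - 1))) * emeasure lborel {x\<in>J. t \<le> l x} \<partial>lborel)"
  proof (rule nn_integral_cong)
    fix t :: real
    have "(\<integral>\<^sup>+x. ennreal (indicator J x * indicator {0..l x} t * (q * t powr (q - 1))) \<partial>lborel)
       = (\<integral>\<^sup>+x. ennreal (indicator {0..} t * (q * t powr (q - 1))) * indicator {x\<in>J. t \<le> l x} x \<partial>lborel)"
      by (intro nn_integral_cong) (auto simp: indicator_def)
    also have "\<dots> = ennreal (indicator {0..} t * (q * t powr (q - 1))) * emeasure lborel {x\<in>J. t \<le> l x}"
      using S_meas by (simp add: nn_integral_cmult_indicator)
    finally show "(\<integral>\<^sup>+x. ennreal (indicator J x * indicator {0..l x} t * (q * t powr (q - 1))) \<partial>lborel)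
       = ennreal (indicator {0..} t * (q * t powr (q - 1))) * emeasure lborel {x\<in>J. t \<le> l x}" .
  qed
  also have "\<dots> = (\<integral>\<^sup>+t. ennreal (indicator {0<..<1} t * (q * t powr (q - 1) * (1 - t) powr (real n + 1 - 1) * M)) \<partial>lborel)"
  proof (rule nn_integral_cong_AE)
    have "AE t in lborel. t \<noteq> 0 \<and> t \<noteq> 1"
      using AE_lborel_singleton[of 0] AE_lborel_singleton[of 1] by eventually_elim auto
    then show "AE t in lborel. ennreal (indicator {0..} t * (q * t powr (q - 1))) * emeasure lborel {x\<in>J. t \<le> l x}
       = ennreal (indicator {0<..<1} t * (q * t powr (q - 1) * (1 - t) powr (real n + 1 - 1) * M))"
    proof eventually_elim
      case (elim t)
      show ?case
      proof (cases "t < 0 \<or> t > 1")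
        case True
        then show ?thesis
        proof
          assume "t < 0" then show ?thesis by (simp add: indicator_def)
        next
          assume "t > 1"
          then have "{x\<in>J. t \<le> l x} = {}" using lJ by force
          then show ?thesis using \<open>t > 1\<close> by (simp only:) (simp add: indicator_def)
        qed
      next
        case False
        with elim have t: "0 < t" "t < 1" by auto
        have "emeasure lborel {x\<in>J. t \<le> l x} = emeasure lebesgue {x\<in>J. t \<le> l x}"
          using S_meas by simp
        also have "\<dots> = emeasure lebesgue ((\<lambda>y. (1-t) *\<^sub>R y + t *\<^sub>R p) ` J)"
          using sl[OF t] by simp
        also have "\<dots> = ennreal ((1 - t) ^ n) * emeasure lebesgue J"
          using emeasure_lebesgue_affine[of "1-t" "t *\<^sub>R p" J] t by (simp add: n_def)
        also have "\<dots> = ennreal ((1 - t) ^ n * M)"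
          using Jfin Jb t M0 by (simp add: ennreal_mult)
        finally have "emeasure lborel {x\<in>J. t \<le> l x} = ennreal ((1 - t) ^ n * M)" .
        moreover have "(1 - t) powr (real n + 1 - 1) = (1 - t) ^ n"
          using t by (simp add: powr_realpow)
        ultimately show ?thesis using t q M0
          by (simp add: indicator_def ennreal_mult'[symmetric] mult_ac)
      qed
    qed
  qed
  also have "\<dots> = ennreal (M * (q * Beta q (real n + 1)))"
  proof -
    have "((\<lambda>t. t powr (q - 1) * (1 - t) powr (real n + 1 - 1)) has_integral Beta q (real n + 1)) {0<..<1}"
      using has_integral_Beta_real[of q "real n + 1"] q by (simp add: has_integral_Icc_iff_Ioo)
    from has_integral_mult_right[OF this, of "q * M"]
    have "((\<lambda>t. q * t powr (q - 1) * (1 - t) powr (real n + 1 - 1) * M) has_integral (M * (q * Beta q (real n + 1)))) {0<..<1}"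
      by (simp add: mult_ac)
    from nn_integral_has_integral_lebesgue[OF _ this] show ?thesis
      using q M0 by simp
  qed
  finally have eq: "(\<integral>\<^sup>+x. ennreal (indicator J x * l x powr q) \<partial>lborel) = ennreal (M * (q * Beta q (real n + 1)))" .
  have "((\<lambda>x. indicator J x * l x powr q) has_integral (M * (q * Beta q (real n + 1)))) UNIV"
  proof (rule nn_integral_has_integral)
    show "(\<lambda>x. indicator J x * l x powr q) \<in> borel_measurable borel"
      using Jb l by measurable
  next
    have "Beta q (real n + 1) > 0" using q by (simp add: Beta_def Gamma_real_pos)
    then show "0 \<le> M * (q * Beta q (real n + 1))" using q M0 by simp
  qed (use eq in auto)
  moreover have "(\<lambda>x. indicator J x * l x powr q) = (\<lambda>x. if x \<in> J then l x powr q else 0)"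
    by (auto simp: indicator_def)
  ultimately show ?thesis unfolding M_def n_def
    by (simp add: has_integral_restrict_UNIV)
qed


lemma linear_repr: "independent B \<Longrightarrow> span B = UNIV \<Longrightarrow> linear (\<lambda>v. representation B v b)"
proof -
  have e: "((*\<^sub>R) :: real \<Rightarrow> real \<Rightarrow> real) = (*)" by (intro ext) simp
  assume "independent B" "span B = UNIV"
  from linear_representation[OF this, of b] show ?thesis by (simp add: linear_def real_scaleR_def[abs_def])
qed
lemma powr_sup: fixes a b q :: real assumes "0 \<le> a" "0 \<le> b" "1 \<le> q"
  shows "a powr q + b powr q \<le> (a + b) powr q"
proof (cases "a + b = 0")
  case True then have "a = 0" "b = 0" using assms by auto
  then show ?thesis by simp
next
  case False
  define s where "s = a + b"
  have s: "s > 0" using False assms s_def by simp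
  have ha: "(a / s) powr q \<le> a / s" 
    using assms s s_def powr_mono'[of 1 q "a/s"] by simp
  have hb: "(b / s) powr q \<le> b / s" 
    using assms s s_def powr_mono'[of 1 q "b/s"] by simp
  have "a powr q + b powr q = s powr q * ((a / s) powr q + (b / s) powr q)"
    using s assms by (simp add: powr_divide distrib_left)
  also have "\<dots> \<le> s powr q * (a / s + b / s)"
    using ha hb by (intro mult_left_mono) auto
  also have "\<dots> = s powr q" using s s_def by (simp add: add_divide_distrib[symmetric])
  finally show ?thesis by (simp add: s_def)
qed
lemma powr_sum_sup: fixes u :: "nat \<Rightarrow> real" assumes "finite A" "\<And>i. i \<in> A \<Longrightarrow> 0 \<le> u i" "1 \<le> q"
  shows "(\<Sum>i\<in>A. u i powr q) \<le> (\<Sum>i\<in>A. u i) powr q"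
  using assms
proof (induction A rule: finite_induct)
  case empty then show ?case by simp
next
  case (insert a A)
  have "(\<Sum>i\<in>insert a A. u i powr q) = u a powr q + (\<Sum>i\<in>A. u i powr q)" using insert by simp
  also have "\<dots> \<le> u a powr q + (\<Sum>i\<in>A. u i) powr q" using insert by simp
  also have "\<dots> \<le> (u a + (\<Sum>i\<in>A. u i)) powr q"
    using insert by (intro powr_sup) (auto intro: sum_nonneg)
  finally show ?case using insert by simp
qed

lemma barycentric_exists:
  fixes v :: "nat \<Rightarrow> 'a::euclidean_space"
  assumes indep: "\<not> affine_dependent (v ` {..DIM('a)})" and inj: "inj_on v {..DIM('a)}"
  obtains l :: "nat \<Rightarrow> 'a \<Rightarrow> real" where
    "\<And>j. l j \<in> borel_measurable borel"
    "\<And>j x y a b. a + b = 1 \<Longrightarrow> l j (a *\<^sub>R x + b *\<^sub>R y) = a * l j x + b * l j y"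
    "\<And>x. (\<Sum>j\<le>DIM('a). l j x) = 1"
    "\<And>x. (\<Sum>j\<le>DIM('a). l j x *\<^sub>R v j) = x"
    "\<And>j k. j \<le> DIM('a) \<Longrightarrow> k \<le> DIM('a) \<Longrightarrow> l j (v k) = (if j = k then 1 else 0)"
proof -
  define n where "n = DIM('a)"
  define W where "W = (\<lambda>i. v i - v 0) ` {1..n}"
  have v0: "v 0 \<notin> v ` {1..n}" using inj unfolding n_def inj_on_def by force
  have vins: "v ` {..n} = insert (v 0) (v ` {1..n})" by (auto simp: image_iff) (metis atLeastAtMost_iff le_zero_eq not_less_eq_eq)
  have "\<not> dependent ((\<lambda>x. - v 0 + x) ` v ` {1..n})"
    using indep affine_dependent_iff_dependent[OF v0] vins unfolding n_def by simp
  then have indW: "independent W" unfolding W_def image_image by simp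
  have injW: "inj_on (\<lambda>i. v i - v 0) {1..n}"
    using inj unfolding inj_on_def n_def by auto
  have cardW: "card W = n" unfolding W_def using card_image[OF injW] by simp
  have spanW: "span W = UNIV"
    using card_eq_dim[of W UNIV] indW cardW unfolding W_def n_def by auto
  define r where "r y i = representation W y (v i - v 0)" for y i
  have linr: "linear (\<lambda>y. r y i)" for i unfolding r_def by (rule linear_repr[OF indW spanW])
  define l where "l j x = (if j = 0 then 1 - (\<Sum>i\<in>{1..n}. r (x - v 0) i) else r (x - v 0) j)" for j x
  have aff: "l j (a *\<^sub>R x + b *\<^sub>R y) = a * l j x + b * l j y" if ab: "a + b = 1" for j x y a b
  proof -
    have e: "a *\<^sub>R x + b *\<^sub>R y - v 0 = a *\<^sub>R (x - v 0) + b *\<^sub>R (y - v 0)"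
      using ab by (simp add: algebra_simps flip: scaleR_add_left)
    have ri: "r (a *\<^sub>R x + b *\<^sub>R y - v 0) i = a * r (x - v 0) i + b * r (y - v 0) i" for i
      unfolding e using linear_add[OF linr] linear_scale[OF linr] by simp
    show ?thesis
    proof (cases "j = 0")
      case True
      have "1 - (\<Sum>i\<in>{1..n}. a * r (x - v 0) i + b * r (y - v 0) i)
          = a * (1 - (\<Sum>i\<in>{1..n}. r (x - v 0) i)) + b * (1 - (\<Sum>i\<in>{1..n}. r (y - v 0) i))"
        using ab by (simp add: sum.distrib sum_distrib_left algebra_simps)
      then show ?thesis using True unfolding l_def ri by simp
    qed (simp add: l_def ri)
  qed
  have meas: "l j \<in> borel_measurable borel" for j
  proof -
    have c: "continuous_on UNIV (\<lambda>x. r (x - v 0) i)" for i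
      using linr[of i] by (intro continuous_on_compose2[OF linear_continuous_on[of "\<lambda>y. r y i"]])
        (auto simp: linear_conv_bounded_linear intro: continuous_intros)
    have "continuous_on UNIV (l j)"
    proof (cases "j = 0")
      case True
      have "continuous_on UNIV (\<lambda>x. 1 - (\<Sum>i\<in>{1..n}. r (x - v 0) i))"
        by (intro continuous_on_diff continuous_on_const continuous_on_sum c)
      then show ?thesis using True unfolding l_def by simp
    next
      case False then show ?thesis unfolding l_def using c[of j] by simp
    qed
    then show ?thesis by (rule borel_measurable_continuous_onI)
  qed
  have split: "{..n} = insert 0 {1..n}" by auto
  have sum1: "(\<Sum>j\<le>n. l j x) = 1" for x
    unfolding split by (simp add: l_def)
  have "(\<Sum>i\<in>{1..n}. r y i *\<^sub>R (v i - v 0)) = (\<Sum>w\<in>W. representation W y w *\<^sub>R w)" for y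
    unfolding r_def using sum.reindex[OF injW, of "\<lambda>w. representation W y w *\<^sub>R w", folded W_def] by (simp add: o_def)
  also have "\<dots> y = y" for y
    using sum_representation_eq[OF indW, of y W] spanW unfolding W_def by simp
  finally have rep: "(\<Sum>i\<in>{1..n}. r y i *\<^sub>R (v i - v 0)) = y" for y .
  have sumv: "(\<Sum>j\<le>n. l j x *\<^sub>R v j) = x" for x
  proof -
    have "(\<Sum>j\<le>n. l j x *\<^sub>R v j) = (1 - (\<Sum>i\<in>{1..n}. r (x - v 0) i)) *\<^sub>R v 0 + (\<Sum>i\<in>{1..n}. r (x - v 0) i *\<^sub>R v i)"
      unfolding split by (simp add: l_def)
    also have "\<dots> = v 0 + (\<Sum>i\<in>{1..n}. r (x - v 0) i *\<^sub>R (v i - v 0))"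
      by (simp add: algebra_simps scaleR_sum_left sum_subtractf)
    also have "\<dots> = x" using rep[of "x - v 0"] by simp
    finally show ?thesis .
  qed
  have delta: "l j (v k) = (if j = k then 1 else 0)" if "j \<le> n" "k \<le> n" for j k
  proof -
    have rk: "r (v k - v 0) i = (if i = k then 1 else 0)" if i: "i \<in> {1..n}" for i
    proof (cases "k = 0")
      case True then show ?thesis using i by (simp add: r_def representation_zero)
    next
      case False
      then have kW: "v k - v 0 \<in> W" using \<open>k \<le> n\<close> unfolding W_def by auto
      have "(v i - v 0 = v k - v 0) = (i = k)"
        using inj i \<open>k \<le> n\<close> unfolding inj_on_def n_def by auto
      then show ?thesis unfolding r_def representation_basis[OF indW kW] by simp
    qed
    show ?thesis
    proof (cases "j = 0")
      case True
      have "(\<Sum>i\<in>{1..n}. r (v k - v 0) i) = (\<Sum>i\<in>{1..n}. if i = k then 1 else 0)"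
        by (intro sum.cong) (auto simp: rk)
      also have "\<dots> = (if k \<in> {1..n} then 1 else 0)" by (simp add: sum.delta)
      finally show ?thesis using True \<open>k \<le> n\<close> by (auto simp: l_def)
    next
      case False
      then show ?thesis using rk[of j] \<open>j \<le> n\<close> by (simp add: l_def)
    qed
  qed
  show ?thesis
    by (rule that[OF meas aff sum1[unfolded n_def] sumv[unfolded n_def] delta[unfolded n_def]])
qed

theorem lemma5:
  fixes v :: "nat \<Rightarrow> 'a::euclidean_space" and c :: 'a and q :: real
  assumes simplex: "\<not> affine_dependent (v ` {0..DIM('a)})"
    and inj: "inj_on v {0..DIM('a)}"
    and c_nz: "c \<noteq> 0"
    and q_ge: "q \<ge> 1"
    and nonneg: "\<And>j. j \<le> DIM('a) \<Longrightarrow> c \<bullet> v j \<ge> 0"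
  shows "integral (convex hull (v ` {0..DIM('a)})) (\<lambda>x. (c \<bullet> x) powr q)
     \<ge> fact DIM('a) * measure lebesgue (convex hull (v ` {0..DIM('a)}))
        * (Gamma (q + 1) / Gamma (q + real DIM('a) + 1))
        * (\<Sum>j\<le>DIM('a). (c \<bullet> v j) powr q)"
proof -
  define n where "n = DIM('a)"
  have set0: "{0..DIM('a)} = {..DIM('a)}" by auto
  define J where "J = convex hull (v ` {..n})"
  define M where "M = measure lebesgue J"
  define K where "K = q * Beta q (real n + 1)"
  have q0: "q > 0" using q_ge by simp
  obtain l :: "nat \<Rightarrow> 'a \<Rightarrow> real" where
    meas: "\<And>j. l j \<in> borel_measurable borel" and
    aff: "\<And>j x y a b. a + b = 1 \<Longrightarrow> l j (a *\<^sub>R x + b *\<^sub>R y) = a * l j x + b * l j y" and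
    sum1: "\<And>x. (\<Sum>j\<le>n. l j x) = 1" and
    sumv: "\<And>x. (\<Sum>j\<le>n. l j x *\<^sub>R v j) = x" and
    delta: "\<And>j k. j \<le> n \<Longrightarrow> k \<le> n \<Longrightarrow> l j (v k) = (if j = k then 1 else 0)"
    using barycentric_exists[of v] simplex inj unfolding set0 n_def by blast
  have Jchar: "J = {x. \<forall>j\<le>n. 0 \<le> l j x}"
  proof
    show "J \<subseteq> {x. \<forall>j\<le>n. 0 \<le> l j x}"
      unfolding J_def
    proof (rule hull_minimal)
      show "v ` {..n} \<subseteq> {x. \<forall>j\<le>n. 0 \<le> l j x}" using delta by auto
      show "convex {x. \<forall>j\<le>n. 0 \<le> l j x}"
        unfolding convex_def using aff by auto
    qed
    show "{x. \<forall>j\<le>n. 0 \<le> l j x} \<subseteq> J"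
    proof
      fix x assume x: "x \<in> {x. \<forall>j\<le>n. 0 \<le> l j x}"
      have "(\<Sum>j\<le>n. l j x *\<^sub>R v j) \<in> J"
        unfolding J_def
        by (rule convex_sum) (use x sum1 in \<open>auto intro: hull_inc\<close>)
      then show "x \<in> J" using sumv by simp
    qed
  qed
  have cJ: "compact J" unfolding J_def by (intro finite_imp_compact_convex_hull) simp
  have lJ: "0 \<le> l j x \<and> l j x \<le> 1" if "x \<in> J" "j \<le> n" for x j
  proof -
    have nn: "\<forall>k\<le>n. 0 \<le> l k x" using that Jchar by auto
    have "l j x \<le> (\<Sum>k\<le>n. l k x)"
      by (rule member_le_sum) (use nn that in auto)
    then show ?thesis using nn that sum1 by auto
  qed
  have homo: "l k ((1 - t) *\<^sub>R y + t *\<^sub>R v j) = (1 - t) * l k y + t * (if k = j then 1 else 0)"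
    if "k \<le> n" "j \<le> n" for k j t y
    using aff[of "1 - t" t k y "v j"] delta[OF that] by simp
  have sl: "{x\<in>J. t \<le> l j x} = (\<lambda>y. (1 - t) *\<^sub>R y + t *\<^sub>R v j) ` J"
    if j: "j \<le> n" and t: "0 < t" "t < 1" for j t
  proof
    show "(\<lambda>y. (1 - t) *\<^sub>R y + t *\<^sub>R v j) ` J \<subseteq> {x\<in>J. t \<le> l j x}"
    proof
      fix x assume "x \<in> (\<lambda>y. (1 - t) *\<^sub>R y + t *\<^sub>R v j) ` J"
      then obtain y where y: "y \<in> J" and xy: "x = (1 - t) *\<^sub>R y + t *\<^sub>R v j" by blast
      have "0 \<le> l k x" if "k \<le> n" for k
        using homo[OF that j] lJ[OF y that] t xy by simp
      then have "x \<in> J" using Jchar by auto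
      moreover have "t \<le> l j x"
        using homo[OF j j] lJ[OF y j] t xy by simp
      ultimately show "x \<in> {x\<in>J. t \<le> l j x}" by simp
    qed
    show "{x\<in>J. t \<le> l j x} \<subseteq> (\<lambda>y. (1 - t) *\<^sub>R y + t *\<^sub>R v j) ` J"
    proof clarify
      fix x assume x: "x \<in> J" and tx: "t \<le> l j x"
      define y where "y = (1 / (1 - t)) *\<^sub>R (x - t *\<^sub>R v j)"
      have "(1 - t) *\<^sub>R y = x - t *\<^sub>R v j" unfolding y_def using t by simp
      then have xy: "x = (1 - t) *\<^sub>R y + t *\<^sub>R v j" by (simp add: algebra_simps)
      have "0 \<le> l k y" if k: "k \<le> n" for k
      proof -
        have "l k x = (1 - t) * l k y + t * (if k = j then 1 else 0)"
          using homo[OF k j, of t y] xy by simp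
        moreover have "0 \<le> l k x" using lJ[OF x k] by simp
        ultimately have "0 \<le> (1 - t) * l k y" using tx t by (cases "k = j") auto
        then show ?thesis using t by (simp add: zero_le_mult_iff)
      qed
      then have "y \<in> J" using Jchar by auto
      then show "x \<in> (\<lambda>y. (1 - t) *\<^sub>R y + t *\<^sub>R v j) ` J" using xy by blast
    qed
  qed
  have int_j: "((\<lambda>x. l j x powr q) has_integral (M * K)) J" if j: "j \<le> n" for j
    unfolding M_def K_def n_def
    by (rule layer_cake_simplex[OF cJ meas q0]) (use lJ j sl n_def in auto)
  have g_int: "((\<lambda>x. \<Sum>j\<le>n. (c \<bullet> v j) powr q * l j x powr q) has_integral (\<Sum>j\<le>n. (c \<bullet> v j) powr q * (M * K))) J"
    by (intro has_integral_sum) (auto intro: has_integral_mult_right int_j)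
  have cx: "c \<bullet> x = (\<Sum>j\<le>n. l j x * (c \<bullet> v j))" for x
  proof -
    have "c \<bullet> x = c \<bullet> (\<Sum>j\<le>n. l j x *\<^sub>R v j)" using sumv by simp
    then show ?thesis by (simp add: inner_sum_right)
  qed
  have cx0: "0 \<le> c \<bullet> x" if "x \<in> J" for x
    unfolding cx[of x] by (intro sum_nonneg mult_nonneg_nonneg) (use lJ[OF that] nonneg n_def in auto)
  have pw: "(\<Sum>j\<le>n. (c \<bullet> v j) powr q * l j x powr q) \<le> (c \<bullet> x) powr q" if x: "x \<in> J" for x
  proof -
    have "(\<Sum>j\<le>n. (c \<bullet> v j) powr q * l j x powr q) = (\<Sum>j\<le>n. (l j x * (c \<bullet> v j)) powr q)"
      by (intro sum.cong refl) (use lJ[OF x] nonneg n_def in \<open>auto simp: powr_mult mult.commute\<close>)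
    also have "\<dots> \<le> (\<Sum>j\<le>n. l j x * (c \<bullet> v j)) powr q"
      by (rule powr_sum_sup) (use lJ[OF x] nonneg n_def q_ge in auto)
    finally show ?thesis unfolding cx[of x] .
  qed
  have cont: "continuous_on J (\<lambda>x. (c \<bullet> x) powr q)"
    by (rule continuous_on_powr') (use cx0 q0 in \<open>auto intro: continuous_intros\<close>)
  have f_int: "(\<lambda>x. (c \<bullet> x) powr q) integrable_on J"
  proof -
    have "integrable lborel (\<lambda>x. indicator J x *\<^sub>R (c \<bullet> x) powr q)"
      by (rule borel_integrable_compact[OF cJ cont])
    then have "(\<lambda>x. indicator J x *\<^sub>R (c \<bullet> x) powr q) integrable_on UNIV"
      by (rule integrable_on_lborel)
    moreover have "(\<lambda>x. indicator J x *\<^sub>R (c \<bullet> x) powr q) = (\<lambda>x. if x \<in> J then (c \<bullet> x) powr q else 0)"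
      by (auto simp: indicator_def)
    ultimately show ?thesis by (simp add: integrable_restrict_UNIV)
  qed
  have le: "(\<Sum>j\<le>n. (c \<bullet> v j) powr q * (M * K)) \<le> integral J (\<lambda>x. (c \<bullet> x) powr q)"
    by (rule has_integral_le[OF g_int integrable_integral[OF f_int]]) (rule pw)
  have Kid: "K = fact n * (Gamma (q + 1) / Gamma (q + real n + 1))"
  proof -
    have "Gamma (real n + 1) = fact n" using Gamma_fact[of n] by (simp add: add.commute)
    moreover have "Gamma (q + 1) = q * Gamma q" using q0 by (intro Gamma_plus1) (auto simp: nonpos_Ints_def)
    moreover have "q + (real n + 1) = q + real n + 1" by simp
    ultimately show ?thesis unfolding K_def Beta_def by (simp add: field_simps)
  qed
  have "fact n * M * (Gamma (q + 1) / Gamma (q + real n + 1)) * (\<Sum>j\<le>n. (c \<bullet> v j) powr q)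
      = (\<Sum>j\<le>n. (c \<bullet> v j) powr q * (M * K))"
    unfolding Kid sum_distrib_left by (intro sum.cong refl) (simp add: mult_ac)
  with le show ?thesis unfolding set0 J_def M_def n_def by simp
qed

end
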